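(* Let $B_1,\ldots,B_r$ be size-$2$ subsets of $\mathbb Z_T$ with $r\ge T^3$. Then there exists a nontrivial subgroup $H\le\mathbb Z_T$ such that the multiset $B_1+B_2+\cdots+B_r$ has bias at most $4T^{3/2}/r^{1/2}$ with respect to $H$.
   Context: $\mathbb Z_T$ is the additive cyclic group of order $T$. For multisets $A,B$, $A+B=\{a+b:a\in A,b\in B\}$ as a multiset; $\mu_A(x)$ is the multiplicity of $x$ in $A$. A multiset $A$ has bias at most $\epsilon$ with respect to a subgroup $H$ if $\mu_A(a)\le(1+\epsilon)\mu_A(a+h)$ for all $a\in A$ and all $h\in H$. *)

theory Defs
  imports Complex_Main "HOL-Library.Multiset"
begin

text \<open>Z_T is modelled by the residues {0..<T} (as nat) with addition mod T.\<close>

definition msumset :: "nat \<Rightarrow> nat multiset \<Rightarrow> nat multiset \<Rightarrow> nat multiset" where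
  "msumset T A B = (\<Sum>a\<in>#A. image_mset (\<lambda>b. (a + b) mod T) B)"

fun iter_sumset :: "nat \<Rightarrow> (nat \<Rightarrow> nat set) \<Rightarrow> nat \<Rightarrow> nat multiset" where
  "iter_sumset T B 0 = {#0#}"
| "iter_sumset T B (Suc n) = msumset T (iter_sumset T B n) (mset_set (B n))"

definition zsubgroup :: "nat \<Rightarrow> nat set \<Rightarrow> bool" where
  "zsubgroup T H \<longleftrightarrow> H \<subseteq> {..<T} \<and> 0 \<in> H \<and>
     (\<forall>x\<in>H. \<forall>y\<in>H. (x + y) mod T \<in> H) \<and> (\<forall>x\<in>H. (T - x) mod T \<in> H)"

definition bias_at_most :: "nat \<Rightarrow> nat multiset \<Rightarrow> nat set \<Rightarrow> real \<Rightarrow> bool" where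
  "bias_at_most T A H \<epsilon> \<longleftrightarrow>
     (\<forall>a\<in>#A. \<forall>h\<in>H. real (count A a) \<le> (1 + \<epsilon>) * real (count A ((a + h) mod T)))"

end

theory Submission
  imports Defs "HOL-Number_Theory.Cong"
begin

lemma cb_step:
  fixes n :: nat
  shows "Suc n * (Suc (Suc (2*n)) choose Suc n) = 2*(2*n+1)*((2*n) choose n)"
proof -
  have e1: "Suc n * (Suc (2*n) choose Suc n) = Suc (2*n) * ((2*n) choose n)"
    by (rule Suc_times_binomial)
  have e2: "Suc n * (Suc (Suc (2*n)) choose Suc n) = Suc (Suc (2*n)) * (Suc (2*n) choose n)"
    by (rule Suc_times_binomial)
  have e3: "Suc (2*n) choose n = Suc (2*n) choose Suc n"
    using binomial_symmetric[of n "Suc (2*n)"] by (simp del: binomial_Suc_Suc)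
  have "Suc n * (Suc n * (Suc (Suc (2*n)) choose Suc n)) = Suc (Suc (2*n)) * (Suc n * (Suc (2*n) choose Suc n))"
    unfolding e2 e3 by (simp only: mult_ac)
  also have "\<dots> = Suc n * (2*(2*n+1)*((2*n) choose n))" unfolding e1 by (simp del: binomial_Suc_Suc)
  finally show ?thesis by (simp only: mult_left_cancel)
qed

lemma cb_even: "(3*n+1) * ((2*n) choose n)^2 \<le> 16^n"
proof (induction n)
  case 0 then show ?case by simp
next
  case (Suc n)
  define a where "a = (2*n) choose n"
  define b where "b = Suc (Suc (2*n)) choose Suc n"
  have eb: "(n+1) * b = 2*(2*n+1)*a" using cb_step[of n] unfolding a_def b_def by simp
  have poly: "(2*n+1)^2*(3*n+4) \<le> 4*(n+1)^2*(3*n+1)"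
    by (simp add: power2_eq_square algebra_simps)
  have "(n+1)^2 * ((3*n+4) * b^2) = (3*n+4)*((n+1)*b)^2" by (simp only: power_mult_distrib mult_ac)
  also have "\<dots> = 4*((2*n+1)^2*(3*n+4))*a^2" unfolding eb by (simp add: power2_eq_square algebra_simps)
  also have "\<dots> \<le> 4*(4*(n+1)^2*(3*n+1))*a^2" using poly by simp
  also have "\<dots> = 16*(n+1)^2*((3*n+1)*a^2)" by (simp add: algebra_simps)
  also have "\<dots> \<le> 16*(n+1)^2*16^n" using Suc.IH unfolding a_def by simp
  finally have "(n+1)^2 * ((3*n+4) * b^2) \<le> (n+1)^2 * 16^Suc n" by (simp add: algebra_simps)
  then have "(3*n+4) * b^2 \<le> 16^Suc n" by simp
  moreover have "2 * Suc n = Suc (Suc (2*n))" "3 * Suc n + 1 = 3*n+4" by simp_all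
  ultimately show ?case unfolding b_def by (simp only:)
qed

lemma cb_bound: "k * (k choose (k div 2))^2 \<le> 4^k"
proof (cases "even k")
  case True
  then obtain n where k: "k = 2*n" by blast
  have "k * (k choose (k div 2))^2 \<le> (3*n+1) * ((2*n) choose n)^2" unfolding k by simp
  also have "\<dots> \<le> 16^n" by (rule cb_even)
  also have "\<dots> = 4^k" unfolding k by (simp add: power_mult)
  finally show ?thesis .
next
  case False
  then obtain n where k: "k = Suc (2*n)" using oddE by fastforce
  define a where "a = (2*n) choose n"
  define c where "c = Suc (2*n) choose n"
  have kd: "k div 2 = n" unfolding k by simp
  have e1: "Suc n * (Suc (2*n) choose Suc n) = Suc (2*n) * ((2*n) choose n)"
    by (rule Suc_times_binomial)
  have e3: "Suc (2*n) choose n = Suc (2*n) choose Suc n"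
    using binomial_symmetric[of n "Suc (2*n)"] by (simp del: binomial_Suc_Suc)
  have ec: "(n+1)*c = (2*n+1)*a" using e1 e3 unfolding c_def a_def by simp
  have poly: "(2*n+1)^3 \<le> 4*(n+1)^2*(3*n+1)"
    by (simp add: power2_eq_square power3_eq_cube algebra_simps)
  have "(n+1)^2 * ((2*n+1)*c^2) = (2*n+1)*((n+1)*c)^2" by (simp only: power_mult_distrib mult_ac)
  also have "\<dots> = (2*n+1)^3*a^2" unfolding ec by (simp add: power2_eq_square power3_eq_cube algebra_simps)
  also have "\<dots> \<le> 4*(n+1)^2*(3*n+1)*a^2" using poly by simp
  also have "\<dots> = 4*(n+1)^2*((3*n+1)*a^2)" by (simp add: algebra_simps)
  also have "\<dots> \<le> 4*(n+1)^2*16^n" using cb_even[of n] unfolding a_def by simp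
  finally have "(n+1)^2 * ((2*n+1)*c^2) \<le> (n+1)^2 * (4*16^n)" by (simp add: algebra_simps)
  then have "(2*n+1)*c^2 \<le> 4*16^n" by simp
  moreover have "4^k = 4*(16::nat)^n" unfolding k by (simp add: power_mult)
  moreover have "k = 2*n+1" unfolding k by simp
  ultimately show ?thesis unfolding kd c_def by (simp only: k)
qed

definition Fm :: "nat \<Rightarrow> nat \<Rightarrow> nat \<Rightarrow> nat" where
  "Fm k m a = (\<Sum>i\<in>{i. i \<le> k \<and> i mod m = a}. k choose i)"

lemma same_mod_close:
  fixes i j m :: nat
  assumes "i mod m = j mod m" "i < j + m" "j < i + m"
  shows "i = j"
proof (rule ccontr)
  assume ne: "i \<noteq> j"
  show False
  proof (cases "i < j")
    case True
    then have "m dvd (j - i)" using assms(1) mod_eq_dvd_iff_nat[of i j m] by simp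
    moreover have "0 < j - i" "j - i < m" using True assms by auto
    ultimately show False using nat_dvd_not_less by blast
  next
    case False
    then have "j < i" using ne by simp
    then have "m dvd (i - j)" using assms(1) mod_eq_dvd_iff_nat[of j i m] by simp
    moreover have "0 < i - j" "i - j < m" using \<open>j < i\<close> assms by auto
    ultimately show False using nat_dvd_not_less by blast
  qed
qed

lemma interleave:
  assumes m: "0 < m" and a: "a < m" and b: "b < m"
  shows "Fm k m a \<le> Fm k m b + (k choose (k div 2))"
proof -
  define p where "p = k div 2"
  define s where "s = (b + m - a) mod m"
  define f where "f = (\<lambda>i. k choose i)"
  define Ia where "Ia = {i. i \<le> k \<and> i mod m = a}"
  define Ib where "Ib = {i. i \<le> k \<and> i mod m = b}"
  define L where "L = {i\<in>Ia. i + s \<le> p}"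
  define Mid where "Mid = {i\<in>Ia. p < i + s \<and> i + s \<le> p + m}"
  define R where "R = {i\<in>Ia. p + m < i + s}"
  have sm: "s < m" unfolding s_def using m by simp
  have shift: "(i + s) mod m = b" if "i mod m = a" for i
  proof -
    have "(i + s) mod m = (i mod m + s) mod m" by (simp add: mod_add_left_eq)
    also have "\<dots> = (a + (b + m - a)) mod m" unfolding s_def that by (simp add: mod_add_right_eq)
    also have "\<dots> = (b + m) mod m" using a by simp
    also have "\<dots> = b" using b by simp
    finally show ?thesis .
  qed
  have fin: "finite Ia" "finite Ib" unfolding Ia_def Ib_def by auto
  have finL: "finite L" "finite Mid" "finite R" using fin unfolding L_def Mid_def R_def by auto
  have Ia_split: "Ia = L \<union> Mid \<union> R" unfolding L_def Mid_def R_def by auto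
  have "Fm k m a = sum f Ia" unfolding Fm_def f_def Ia_def by simp
  also have "\<dots> = sum f L + sum f Mid + sum f R"
  proof -
    have d1: "L \<inter> Mid = {}" unfolding L_def Mid_def by auto
    have d2: "(L \<union> Mid) \<inter> R = {}" unfolding L_def Mid_def R_def by auto
    have "sum f (L \<union> Mid \<union> R) = sum f (L \<union> Mid) + sum f R"
      using finL d2 by (intro sum.union_disjoint) auto
    also have "sum f (L \<union> Mid) = sum f L + sum f Mid"
      using finL d1 by (intro sum.union_disjoint) auto
    finally show ?thesis unfolding Ia_split .
  qed
  finally have split: "Fm k m a = sum f L + sum f Mid + sum f R" .
  have L1: "sum f L \<le> sum f ((\<lambda>i. i + s) ` L)"
  proof -
    have "sum f L \<le> sum (\<lambda>i. f (i + s)) L"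
    proof (rule sum_mono)
      fix i assume "i \<in> L"
      then have "i + s \<le> p" unfolding L_def by simp
      then show "f i \<le> f (i + s)" unfolding f_def p_def by (intro binomial_mono) auto
    qed
    also have "\<dots> = sum f ((\<lambda>i. i + s) ` L)" by (subst sum.reindex) (auto simp: inj_on_def)
    finally show ?thesis .
  qed
  have R1: "sum f R \<le> sum f ((\<lambda>i. i + s - m) ` R)"
  proof -
    have "sum f R \<le> sum (\<lambda>i. f (i + s - m)) R"
    proof (rule sum_mono)
      fix i assume "i \<in> R"
      then have "p + m < i + s" "i \<le> k" unfolding R_def Ia_def by auto
      then show "f i \<le> f (i + s - m)" unfolding f_def p_def using sm by (intro binomial_antimono) auto
    qed
    also have "\<dots> = sum f ((\<lambda>i. i + s - m) ` R)"
      by (subst sum.reindex) (auto simp: inj_on_def R_def)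
    finally show ?thesis .
  qed
  have imgs: "(\<lambda>i. i + s) ` L \<union> (\<lambda>i. i + s - m) ` R \<subseteq> Ib"
  proof
    fix j assume "j \<in> (\<lambda>i. i + s) ` L \<union> (\<lambda>i. i + s - m) ` R"
    then consider (l) i where "i \<in> L" "j = i + s" | (r) i where "i \<in> R" "j = i + s - m" by blast
    then show "j \<in> Ib"
    proof cases
      case l
      then have "i + s \<le> p" "i mod m = a" unfolding L_def Ia_def by auto
      moreover have "p \<le> k" unfolding p_def by simp
      ultimately show ?thesis using l(2) shift[of i] unfolding Ib_def by simp
    next
      case r
      then have ir: "p + m < i + s" "i \<le> k" "i mod m = a" unfolding R_def Ia_def by auto
      have "(i + s - m) mod m = (i + s) mod m" using ir by (simp add: le_mod_geq)
      also have "\<dots> = b" using shift[of i] ir(3) by simp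
      finally have "j mod m = b" using r(2) by simp
      moreover have "j \<le> k" using r(2) ir(2) sm by simp
      ultimately show ?thesis unfolding Ib_def by simp
    qed
  qed
  have disj: "(\<lambda>i. i + s) ` L \<inter> (\<lambda>i. i + s - m) ` R = {}"
  proof -
    have "x \<le> p" if "x \<in> (\<lambda>i. i + s) ` L" for x using that unfolding L_def by auto
    moreover have "p < x" if "x \<in> (\<lambda>i. i + s - m) ` R" for x using that unfolding R_def by auto
    ultimately show ?thesis by fastforce
  qed
  have "sum f L + sum f R \<le> sum f ((\<lambda>i. i + s) ` L) + sum f ((\<lambda>i. i + s - m) ` R)"
    using L1 R1 by simp
  also have "\<dots> = sum f ((\<lambda>i. i + s) ` L \<union> (\<lambda>i. i + s - m) ` R)"
    using disj finL by (simp add: sum.union_disjoint)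
  also have "\<dots> \<le> sum f Ib" using imgs fin by (intro sum_mono2) auto
  also have "\<dots> = Fm k m b" unfolding Fm_def f_def Ib_def by simp
  finally have LR: "sum f L + sum f R \<le> Fm k m b" .
  have M1: "sum f Mid \<le> k choose (k div 2)"
  proof (cases "Mid = {}")
    case True then show ?thesis by simp
  next
    case False
    then obtain i0 where i0: "i0 \<in> Mid" by blast
    have "Mid = {i0}"
    proof (intro equalityI subsetI)
      fix i assume "i \<in> Mid"
      then have h1: "i mod m = a" "p < i + s" "i + s \<le> p + m" unfolding Mid_def Ia_def by auto
      have h2: "i0 mod m = a" "p < i0 + s" "i0 + s \<le> p + m" using i0 unfolding Mid_def Ia_def by auto
      have "i = i0" by (rule same_mod_close[of _ m]) (use h1 h2 in linarith)+
      then show "i \<in> {i0}" by simp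
    qed (use i0 in auto)
    then show ?thesis unfolding f_def by (simp add: binomial_maximum)
  qed
  show ?thesis using split LR M1 by simp
qed

lemma Fm_sum:
  assumes "0 < m"
  shows "(\<Sum>a<m. Fm k m a) = 2^k"
proof -
  have "(\<Sum>a<m. Fm k m a) = (\<Sum>a<m. \<Sum>i\<in>{i\<in>{..k}. i mod m = a}. k choose i)"
    unfolding Fm_def by (intro sum.cong) auto
  also have "\<dots> = (\<Sum>i\<le>k. k choose i)"
    by (rule sum.group) (use assms in auto)
  also have "\<dots> = 2^k" by (rule choose_row_sum)
  finally show ?thesis .
qed

lemma Fm_lower:
  assumes "0 < m" "b < m"
  shows "2^k \<le> m * (Fm k m b + (k choose (k div 2)))"
proof -
  have "2^k = (\<Sum>a<m. Fm k m a)" using Fm_sum[OF assms(1)] by simp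
  also have "\<dots> \<le> (\<Sum>a<m. Fm k m b + (k choose (k div 2)))"
    by (intro sum_mono interleave) (use assms in auto)
  also have "\<dots> = m * (Fm k m b + (k choose (k div 2)))" by simp
  finally show ?thesis .
qed

lemma cmod: "[int (n mod T) = int n] (mod int T)"
  by (simp add: of_nat_mod)

lemma cm: "w \<le> T \<Longrightarrow> [int ((a + T - w) mod T) = int a + int T - int w] (mod int T)"
  using cmod[of "a + T - w" T] by (simp add: of_nat_diff)

lemma ca: "[int ((a + b) mod T) = int a + int b] (mod int T)"
  using cmod[of "a + b" T] by simp

lemma nat_mod_eq_by_cong: "[int X = int Y] (mod int T) \<Longrightarrow> X mod T = Y mod T"
  by (metis cong_int_iff cong_def)

lemma t1:
  fixes x s y T :: nat
  assumes "0 < T" "x < T" "s < T" "y < T"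
  shows "(((x+T-s) mod T) + T - y) mod T = (x + T - (y+s) mod T) mod T"
proof (rule nat_mod_eq_by_cong)
  have m1: "(x+T-s) mod T < T" "(y+s) mod T < T" using assms by simp_all
  have "int (((x+T-s) mod T) + T - y) = int ((x+T-s) mod T) + int T - int y" using assms by simp
  also have "[\<dots> = (int x + int T - int s) + int T - int y] (mod int T)"
    using cm[of s T x] assms by (intro cong_diff cong_add) auto
  also have "(int x + int T - int s) + int T - int y = int x + int T - (int y + int s) + int T" by simp
  also have "[\<dots> = int x + int T - int ((y+s) mod T) + 0] (mod int T)"
    using ca[of y s T] by (intro cong_diff cong_add) (auto simp: cong_sym cong_def)
  also have "int x + int T - int ((y+s) mod T) + 0 = int (x + T - (y+s) mod T)" using m1 by simp
  finally show "[int ((x + T - s) mod T + T - y) = int (x + T - (y + s) mod T)] (mod int T)" .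
qed

lemma msubc: "(x::nat) < T \<Longrightarrow> s \<le> T \<Longrightarrow> (x+T-s) mod T = (if s \<le> x then x - s else x + T - s)"
proof (cases "s \<le> x")
  case True
  assume "x < T" "s \<le> T"
  then have "x+T-s = (x - s) + T" using True by simp
  then have "(x+T-s) mod T = ((x - s) + T) mod T" by simp
  also have "\<dots> = x - s" using \<open>x < T\<close> by simp
  finally show ?thesis using True by simp
qed simp

lemma maddc: "a < T \<Longrightarrow> p < T \<Longrightarrow> (a+p) mod T = (if a+p < (T::nat) then a+p else a+p-T)"
proof (cases "a + p < T")
  case False
  assume "a < T" "p < T"
  then have "(a+p) mod T = (a+p-T) mod T" using False by (simp add: le_mod_geq)
  also have "\<dots> = a+p-T" using \<open>a < T\<close> \<open>p < T\<close> by simp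
  finally show ?thesis using False by simp
qed simp

lemma key1:
  fixes a p x T :: nat
  assumes "a < T" "p < T" "x < T"
  shows "(a+p) mod T = x \<longleftrightarrow> a = (x+T-p) mod T"
  using maddc[of a T p] msubc[of x T p] assms by auto

lemma msumset_two:
  assumes "p \<noteq> q"
  shows "msumset T A (mset_set {p,q}) = image_mset (\<lambda>a. (a+p) mod T) A + image_mset (\<lambda>a. (a+q) mod T) A"
proof (induction A)
  case empty then show ?case by (simp add: msumset_def)
next
  case (add x A)
  then show ?case using assms by (simp add: msumset_def)
qed

lemma count_img:
  fixes A :: "nat multiset"
  assumes "set_mset A \<subseteq> {..<T}" "p < T" "x < T"
  shows "count (image_mset (\<lambda>a. (a+p) mod T) A) x = count A ((x + T - p) mod T)"
  using assms(1)
proof (induction A)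
  case empty then show ?case by simp
next
  case (add y A)
  then have y: "y < T" and A: "set_mset A \<subseteq> {..<T}" by auto
  have "((y+p) mod T = x) = (y = (x + T - p) mod T)" using key1[OF y assms(2,3)] .
  then show ?case using add.IH[OF A] by auto
qed

lemma iter_set:
  assumes "0 < T" "\<And>i. i < n \<Longrightarrow> B i \<subseteq> {..<T} \<and> card (B i) = 2"
  shows "set_mset (iter_sumset T B n) \<subseteq> {..<T}"
  using assms(2)
proof (induction n)
  case 0 then show ?case using assms(1) by simp
next
  case (Suc n)
  obtain p q where pq: "B n = {p,q}" "p \<noteq> q" using Suc.prems[of n] unfolding card_2_iff by auto
  show ?case using assms(1) unfolding iter_sumset.simps pq msumset_two[OF pq(2)] by auto
qed

lemma iter_step:
  assumes "0 < T" "set_mset (iter_sumset T B n) \<subseteq> {..<T}" "B n = {p,q}" "p \<noteq> q" "p < T" "q < T" "x < T"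
  shows "count (iter_sumset T B (Suc n)) x =
    count (iter_sumset T B n) ((x+T-p) mod T) + count (iter_sumset T B n) ((x+T-q) mod T)"
  unfolding iter_sumset.simps assms(3) msumset_two[OF assms(4)]
  using count_img[OF assms(2) assms(5) assms(7)] count_img[OF assms(2) assms(6) assms(7)] by simp

lemma int_subm: "w \<le> T \<Longrightarrow> int ((x + T - w) mod T) = (int x - int w) mod int T"
proof -
  assume "w \<le> T"
  then have "int (x + T - w) = int x - int w + int T" by simp
  then have "int ((x + T - w) mod T) = (int x - int w + int T) mod int T" by (simp add: of_nat_mod)
  also have "\<dots> = (int x - int w) mod int T" by simp
  finally show ?thesis .
qed

lemma int_addm: "int ((a + b) mod T) = (int a + int b) mod int T"
  by (simp add: of_nat_mod)

lemma t2:
  fixes x s y d T :: nat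
  assumes "0 < T" "x < T" "s < T" "y < T" "d < T"
  shows "((((x+T-s) mod T + T - y) mod T) + T - d) mod T = (((x + T - (s+d) mod T) mod T) + T - y) mod T"
  apply (subst of_nat_eq_iff[symmetric, where 'a=int])
  using assms apply (simp add: int_subm int_addm mod_le_divisor less_imp_le)
  apply (simp add: mod_simps algebra_simps)
  done

lemma sum_shift:
  fixes G :: "nat \<Rightarrow> 'b::comm_monoid_add"
  assumes "0 < T"
  shows "(\<Sum>y<T. G y) = (\<Sum>y<T. G ((y + s) mod T))"
proof -
  have inj: "inj_on (\<lambda>y. (y + s) mod T) {..<T}"
  proof (rule inj_onI)
    fix y y' assume "y \<in> {..<T}" "y' \<in> {..<T}" "(y + s) mod T = (y' + s) mod T"
    then show "y = y'" using cong_add_rcancel_nat[of y s y' T] cong_less_modulus_unique_nat[of y y' T]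
      by (auto simp: cong_def)
  qed
  have img: "(\<lambda>y. (y + s) mod T) ` {..<T} = {..<T}"
    by (rule endo_inj_surj) (use inj assms in auto)
  have "bij_betw (\<lambda>y. (y + s) mod T) {..<T} {..<T}" using inj img by (simp add: bij_betw_def)
  then show ?thesis by (rule sum.reindex_bij_betw[symmetric])
qed

definition cf :: "nat \<Rightarrow> nat \<Rightarrow> nat \<Rightarrow> nat \<Rightarrow> nat" where
  "cf T d k x = (\<Sum>i\<le>k. (k choose i) * (if (i*d) mod T = x then 1 else 0))"

lemma cf_Suc:
  assumes "0 < T" "d < T" "x < T"
  shows "cf T d (Suc k) x = cf T d k x + cf T d k ((x+T-d) mod T)"
proof -
  define \<chi> where "\<chi> i = (if (i*d) mod T = x then 1 else (0::nat))" for i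
  define \<chi>' where "\<chi>' i = (if (i*d) mod T = (x+T-d) mod T then 1 else (0::nat))" for i
  have chi: "\<chi> (Suc i) = \<chi>' i" for i
  proof -
    have "(Suc i * d) mod T = ((i*d) mod T + d) mod T" by (simp add: mod_add_left_eq add.commute[of d])
    then have "((Suc i * d) mod T = x) = ((i*d) mod T = (x+T-d) mod T)"
      using key1[of "(i*d) mod T" T d x] assms by simp
    then show ?thesis unfolding \<chi>_def \<chi>'_def by simp
  qed
  have A: "cf T d (Suc k) x = \<chi> 0 + (\<Sum>i\<le>k. (k choose i) * \<chi> (Suc i)) + (\<Sum>i\<le>k. (k choose Suc i) * \<chi> (Suc i))"
    unfolding cf_def \<chi>_def[symmetric] sum.atMost_Suc_shift by (simp add: sum.distrib algebra_simps)
  have B: "cf T d k x = \<chi> 0 + (\<Sum>i\<le>k. (k choose Suc i) * \<chi> (Suc i))"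
  proof -
    have "cf T d k x = (\<Sum>i\<le>Suc k. (k choose i) * \<chi> i)" unfolding cf_def \<chi>_def[symmetric] by simp
    also have "\<dots> = \<chi> 0 + (\<Sum>i\<le>k. (k choose Suc i) * \<chi> (Suc i))"
      unfolding sum.atMost_Suc_shift by simp
    finally show ?thesis .
  qed
  have C: "cf T d k ((x+T-d) mod T) = (\<Sum>i\<le>k. (k choose i) * \<chi> (Suc i))"
    unfolding cf_def chi \<chi>'_def by simp
  show ?thesis using A B C by simp
qed

fun gf :: "nat \<Rightarrow> (nat \<Rightarrow> nat set) \<Rightarrow> (nat \<Rightarrow> bool) \<Rightarrow> (nat \<Rightarrow> nat) \<Rightarrow> nat \<Rightarrow> nat \<Rightarrow> nat" where
  "gf T B P S 0 = (\<lambda>x. if x = 0 then 1 else 0)"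
| "gf T B P S (Suc n) = (if P n then (\<lambda>x. gf T B P S n ((x + T - S n) mod T))
     else (\<lambda>x. gf T B P S n ((x + T - Min (B n)) mod T) + gf T B P S n ((x + T - Max (B n)) mod T)))"

definition cv :: "nat \<Rightarrow> (nat \<Rightarrow> nat) \<Rightarrow> (nat \<Rightarrow> nat) \<Rightarrow> nat \<Rightarrow> nat" where
  "cv T g c x = (\<Sum>y<T. g y * c ((x+T-y) mod T))"

lemma cv_shift:
  assumes "0 < T" "s < T" "x < T"
  shows "cv T (\<lambda>y. g ((y+T-s) mod T)) c x = cv T g c ((x+T-s) mod T)"
proof -
  have "cv T (\<lambda>y. g ((y+T-s) mod T)) c x = (\<Sum>y<T. g ((((y+s) mod T)+T-s) mod T) * c ((x+T-(y+s) mod T) mod T))"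
    unfolding cv_def by (rule sum_shift[OF assms(1)])
  also have "\<dots> = (\<Sum>y<T. g y * c ((((x+T-s) mod T) + T - y) mod T))"
  proof (rule sum.cong[OF refl])
    fix y assume "y \<in> {..<T}"
    then have y: "y < T" by simp
    have e1: "(((y+s) mod T)+T-s) mod T = y"
      using key1[of y T s "(y+s) mod T"] y assms by simp
    have e2: "(x+T-(y+s) mod T) mod T = (((x+T-s) mod T) + T - y) mod T"
      apply (subst of_nat_eq_iff[symmetric, where 'a=int])
      using assms y apply (simp add: int_subm int_addm mod_le_divisor less_imp_le)
      apply (simp add: mod_simps algebra_simps)
      done
    show "g ((((y+s) mod T)+T-s) mod T) * c ((x+T-(y+s) mod T) mod T) = g y * c ((((x+T-s) mod T) + T - y) mod T)"
      using e1 e2 by simp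
  qed
  also have "\<dots> = cv T g c ((x+T-s) mod T)" unfolding cv_def ..
  finally show ?thesis .
qed

lemma card_Suc_P: "card {i. i < Suc n \<and> P i} = card {i. i < n \<and> P i} + (if P n then 1 else 0)"
proof -
  have "{i. i < Suc n \<and> P i} = (if P n then insert n {i. i < n \<and> P i} else {i. i < n \<and> P i})"
    by (auto simp: less_Suc_eq)
  then show ?thesis by simp
qed

lemma decomp:
  assumes T0: "0 < T" and d: "d < T"
    and hB: "\<And>i. i < r \<Longrightarrow> B i \<subseteq> {..<T} \<and> card (B i) = 2"
    and hP: "\<And>i. i < r \<Longrightarrow> P i \<Longrightarrow> S i < T \<and> B i = {S i, (S i + d) mod T}"
  shows "n \<le> r \<Longrightarrow> x < T \<Longrightarrow> count (iter_sumset T B n) x = cv T (gf T B P S n) (cf T d (card {i. i<n \<and> P i})) x"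
proof (induction n arbitrary: x)
  case 0
  have "cv T (gf T B P S 0) (cf T d 0) x = (\<Sum>y<T. (if y = 0 then 1 else 0) * cf T d 0 ((x+T-y) mod T))"
    unfolding cv_def by simp
  also have "\<dots> = (\<Sum>y<T. (if y = 0 then cf T d 0 ((x+T-y) mod T) else 0))"
    by (intro sum.cong) auto
  also have "\<dots> = cf T d 0 ((x+T-0) mod T)" using T0 by (simp add: sum.delta)
  also have "\<dots> = (if x = 0 then 1 else 0)" using 0 by (simp add: cf_def)
  finally show ?case by simp
next
  case (Suc n)
  have n: "n < r" using Suc.prems by simp
  have set: "set_mset (iter_sumset T B n) \<subseteq> {..<T}" using iter_set[OF T0, of n B] hB n by simp
  define K where "K = card {i. i<n \<and> P i}"
  define g where "g = gf T B P S n"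
  have IH: "count (iter_sumset T B n) w = cv T g (cf T d K) w" if "w < T" for w
    using Suc.IH[of w] Suc.prems that unfolding K_def g_def by simp
  show ?case
  proof (cases "P n")
    case True
    define s where "s = S n"
    have s: "s < T" and Bn: "B n = {s, (s+d) mod T}" using hP[OF n True] unfolding s_def by auto
    have ne: "s \<noteq> (s+d) mod T" using hB[OF n] Bn by auto
    have sd: "(s+d) mod T < T" using T0 by simp
    have "count (iter_sumset T B (Suc n)) x =
      count (iter_sumset T B n) ((x+T-s) mod T) + count (iter_sumset T B n) ((x+T-(s+d) mod T) mod T)"
      by (rule iter_step[OF T0 set Bn ne s sd Suc.prems(2)])
    also have "\<dots> = cv T g (cf T d K) ((x+T-s) mod T) + cv T g (cf T d K) ((x+T-(s+d) mod T) mod T)"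
      using IH T0 by simp
    also have "\<dots> = cv T g (cf T d (Suc K)) ((x+T-s) mod T)"
    proof -
      have "cv T g (cf T d (Suc K)) ((x+T-s) mod T) = (\<Sum>y<T. g y * (cf T d K (((x+T-s) mod T + T - y) mod T)
          + cf T d K (((((x+T-s) mod T + T - y) mod T) + T - d) mod T)))"
        unfolding cv_def using cf_Suc T0 d by simp
      also have "\<dots> = cv T g (cf T d K) ((x+T-s) mod T) + (\<Sum>y<T. g y * cf T d K (((((x+T-s) mod T + T - y) mod T) + T - d) mod T))"
        unfolding cv_def by (simp add: sum.distrib algebra_simps)
      also have "(\<Sum>y<T. g y * cf T d K (((((x+T-s) mod T + T - y) mod T) + T - d) mod T)) = cv T g (cf T d K) ((x+T-(s+d) mod T) mod T)"
        unfolding cv_def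
      proof (rule sum.cong[OF refl])
        fix y assume "y \<in> {..<T}"
        then have "y < T" by simp
        then show "g y * cf T d K (((((x+T-s) mod T + T - y) mod T) + T - d) mod T) = g y * cf T d K ((((x+T-(s+d) mod T) mod T) + T - y) mod T)"
          using t2[of T x s y d] T0 Suc.prems(2) s d by simp
      qed
      finally show ?thesis by simp
    qed
    also have "\<dots> = cv T (gf T B P S (Suc n)) (cf T d (Suc K)) x"
      using cv_shift[OF T0 s Suc.prems(2), of g] True unfolding g_def s_def by simp
    finally show ?thesis using True card_Suc_P[of n P] unfolding K_def by simp
  next
    case False
    obtain p q where pq: "B n = {p,q}" "p \<noteq> q" using hB[OF n] unfolding card_2_iff by auto
    have BT: "B n \<subseteq> {..<T}" using hB[OF n] by simp
    define a where "a = Min (B n)"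
    define b where "b = Max (B n)"
    have ab: "B n = {a,b}" "a \<noteq> b" using pq unfolding a_def b_def by (auto simp: min_def max_def)
    have aT: "a < T" "b < T" using BT ab by auto
    have "count (iter_sumset T B (Suc n)) x =
      count (iter_sumset T B n) ((x+T-a) mod T) + count (iter_sumset T B n) ((x+T-b) mod T)"
      by (rule iter_step[OF T0 set ab(1) ab(2) aT Suc.prems(2)])
    also have "\<dots> = cv T g (cf T d K) ((x+T-a) mod T) + cv T g (cf T d K) ((x+T-b) mod T)"
      using IH T0 by simp
    also have "\<dots> = cv T (\<lambda>y. g ((y+T-a) mod T)) (cf T d K) x + cv T (\<lambda>y. g ((y+T-b) mod T)) (cf T d K) x"
      using cv_shift[OF T0 aT(1) Suc.prems(2)] cv_shift[OF T0 aT(2) Suc.prems(2)] by simp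
    also have "\<dots> = cv T (gf T B P S (Suc n)) (cf T d K) x"
      using False unfolding cv_def g_def a_def b_def by (simp add: sum.distrib algebra_simps)
    finally show ?thesis using False card_Suc_P[of n P] unfolding K_def by simp
  qed
qed

definition ordm :: "nat \<Rightarrow> nat \<Rightarrow> nat" where
  "ordm T d = (LEAST m. 0 < m \<and> (m*d) mod T = 0)"

lemma ordm_basic:
  assumes "0 < T"
  shows "0 < ordm T d" "(ordm T d * d) mod T = 0" "ordm T d \<le> T"
proof -
  have PT: "0 < T \<and> (T*d) mod T = 0" using assms by simp
  show "0 < ordm T d" "(ordm T d * d) mod T = 0"
    using LeastI[of "\<lambda>m. 0 < m \<and> (m*d) mod T = 0" T, OF PT] unfolding ordm_def by auto
  show "ordm T d \<le> T" unfolding ordm_def by (rule Least_le) (rule PT)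
qed

lemma ordm_min:
  assumes a1: "0 < j" and a2: "j < ordm T d"
  shows "(j*d) mod T \<noteq> 0"
proof -
  have "j < (LEAST m. 0 < m \<and> (m*d) mod T = 0)" using a2 unfolding ordm_def .
  then have "\<not> (0 < j \<and> (j*d) mod T = 0)" by (rule not_less_Least)
  then show ?thesis using a1 by simp
qed

lemma mod_ord:
  assumes "0 < T"
  shows "(i*d) mod T = ((i mod ordm T d)*d) mod T"
proof -
  define m where "m = ordm T d"
  have md: "(m*d) mod T = 0" using ordm_basic[OF assms] unfolding m_def by simp
  have "i*d = ((i div m)*m + i mod m)*d" by (simp only: div_mult_mod_eq)
  also have "\<dots> = (i div m)*(m*d) + (i mod m)*d" by (simp only: add_mult_distrib mult.assoc)
  finally have "i*d = (i div m)*(m*d) + (i mod m)*d" .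
  then have "(i*d) mod T = ((i div m)*(m*d) + (i mod m)*d) mod T" by simp
  also have "\<dots> = ((i mod m)*d) mod T"
  proof -
    obtain q where q: "m*d = T*q" using md by (metis mod_0_imp_dvd dvdE)
    have e: "(i div m)*(m*d) + (i mod m)*d = (i mod m)*d + T*((i div m)*q)" unfolding q by (simp add: ac_simps)
    show ?thesis unfolding e by simp
  qed
  finally show ?thesis unfolding m_def .
qed

lemma ord_aux:
  assumes "u \<le> v" "(u*d) mod T = (v*d) mod T" "v < ordm T d"
  shows "u = v"
proof (rule ccontr)
    assume "u \<noteq> v"
    then have p1: "0 < v - u" and p2: "v - u < ordm T d" using assms by auto
    have p3: "((v - u)*d) mod T = 0"
    proof -
      have ud: "u*d \<le> v*d" using assms(1) by simp
      have "T dvd (v*d - u*d)" using mod_eq_dvd_iff_nat[OF ud, of T] assms(2) by simp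
      then show ?thesis by (simp add: diff_mult_distrib)
    qed
    show False using ordm_min[OF p1 p2] p3 by simp
qed

lemma ord_eq:
  assumes T: "0 < T" and e: "(i*d) mod T = (j*d) mod T"
  shows "i mod ordm T d = j mod ordm T d"
proof -
  define m where "m = ordm T d"
  have m0: "0 < m" using ordm_basic[OF T] unfolding m_def by simp
  define u where "u = i mod m"
  define v where "v = j mod m"
  have uv: "(u*d) mod T = (v*d) mod T" using e mod_ord[OF T, of i d] mod_ord[OF T, of j d]
    unfolding u_def v_def m_def by simp
  have um: "u < m" "v < m" using m0 unfolding u_def v_def by simp_all
  have "u = v"
  proof (cases "u \<le> v")
    case True then show ?thesis using ord_aux[OF True uv] um(2) unfolding m_def by simp
  next
    case False
    then have "v \<le> u" by simp
    then show ?thesis using ord_aux[OF \<open>v \<le> u\<close> uv[symmetric]] um(1) unfolding m_def by simp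
  qed
  then show ?thesis unfolding u_def v_def m_def .
qed

lemma cf_at:
  assumes "0 < T"
  shows "cf T d k ((j*d) mod T) = Fm k (ordm T d) (j mod ordm T d)"
proof -
  have "cf T d k ((j*d) mod T) = (\<Sum>i\<le>k. (if i mod ordm T d = j mod ordm T d then k choose i else 0))"
    unfolding cf_def
  proof (rule sum.cong[OF refl])
    fix i
    have "((i*d) mod T = (j*d) mod T) = (i mod ordm T d = j mod ordm T d)"
      using ord_eq[OF assms, of i d j] mod_ord[OF assms, of i d] mod_ord[OF assms, of j d] by auto
    then show "(k choose i) * (if (i*d) mod T = (j*d) mod T then 1 else 0) = (if i mod ordm T d = j mod ordm T d then k choose i else 0)"
      by simp
  qed
  also have "\<dots> = (\<Sum>i\<in>{i\<in>{..k}. i mod ordm T d = j mod ordm T d}. k choose i)"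
    by (rule sum.inter_filter[symmetric]) simp
  also have "\<dots> = Fm k (ordm T d) (j mod ordm T d)"
  proof -
    have S: "{i\<in>{..k}. i mod ordm T d = j mod ordm T d} = {i. i \<le> k \<and> i mod ordm T d = j mod ordm T d}"
      by blast
    show ?thesis unfolding Fm_def S ..
  qed
  finally show ?thesis .
qed

lemma cf_zero:
  assumes "\<forall>i. (i*d) mod T \<noteq> z"
  shows "cf T d k z = 0"
proof -
  have "\<And>i. (if (i*d) mod T = z then 1 else 0) = (0::nat)" using assms by auto
  then show ?thesis unfolding cf_def by simp
qed

lemma numeric:
  fixes T r k m M :: nat
  assumes T2: "2 \<le> T" and r3: "T^3 \<le> r" and rk: "r \<le> k * (T div 2)" and cb: "k * M^2 \<le> 4^k"
    and mT: "m \<le> T"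
  shows "real M * (1 + 4 * real T powr (3/2) / sqrt (real r)) * real m \<le> (4 * real T powr (3/2) / sqrt (real r)) * 2^k"
proof -
  define e where "e = 4 * real T powr (3/2) / sqrt (real r)"
  have T0: "0 < real T" using T2 by simp
  have "(8::nat) \<le> T^3" using power_mono[OF T2, of 3] by simp
  then have r0: "0 < real r" using r3 by simp
  have sr0: "0 < sqrt (real r)" using r0 by simp
  have Tp: "real T powr (3/2) = real T * sqrt (real T)"
  proof -
    have "real T powr (3/2) = real T powr (1 + 1/2)" by simp
    also have "\<dots> = real T powr 1 * real T powr (1/2)" by (rule powr_add)
    also have "\<dots> = real T * sqrt (real T)" using T0 by (simp add: powr_half_sqrt)
    finally show ?thesis .
  qed
  have e_def': "e = 4 * (real T * sqrt (real T)) / sqrt (real r)" unfolding e_def Tp ..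
  have e0: "0 \<le> e" unfolding e_def' by simp
  have sT3: "real T * sqrt (real T) = sqrt (real T ^ 3)"
  proof -
    have "sqrt (real T ^ 3) = sqrt (real T ^ 2 * real T)" by (simp add: power3_eq_cube power2_eq_square)
    also have "\<dots> = sqrt (real T ^ 2) * sqrt (real T)" by (rule real_sqrt_mult)
    also have "\<dots> = real T * sqrt (real T)" by simp
    finally show ?thesis by simp
  qed
  have e4: "e \<le> 4"
  proof -
    have "sqrt (real T ^ 3) \<le> sqrt (real r)" using r3 by (simp flip: of_nat_power)
    then have "real T * sqrt (real T) \<le> sqrt (real r)" using sT3 by simp
    then show ?thesis unfolding e_def' using sr0 by (simp add: divide_le_eq)
  qed
  have kT: "25 * real r \<le> 16 * (real T * real k)"
  proof -
    have "2 * (T div 2) \<le> T" by simp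
    then have "2 * r \<le> k * T" using rk by (metis mult.commute mult_le_mono2 order_trans mult.left_commute)
    then have "2 * real r \<le> real k * real T" by (simp flip: of_nat_mult)
    then have "2 * real r \<le> real T * real k" by (simp only: mult.commute)
    then show ?thesis by linarith
  qed
  have s5: "5 * sqrt (real r) \<le> 4 * sqrt (real T * real k)"
  proof (rule power2_le_imp_le)
    show "(5 * sqrt (real r))^2 \<le> (4 * sqrt (real T * real k))^2"
      using kT by (simp add: power_mult_distrib)
    show "0 \<le> 4 * sqrt (real T * real k)" by simp
  qed
  have key: "5 * real T \<le> e * sqrt (real k)"
  proof -
    have "e * sqrt (real k) = real T * (4 * sqrt (real T * real k)) / sqrt (real r)"
      unfolding e_def' by (simp add: real_sqrt_mult)
    also have "\<dots> \<ge> real T * (5 * sqrt (real r)) / sqrt (real r)"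
      using s5 T0 sr0 by (intro divide_right_mono mult_left_mono) auto
    also have "real T * (5 * sqrt (real r)) / sqrt (real r) = 5 * real T" using sr0 by simp
    finally show ?thesis by simp
  qed
  have Mk: "sqrt (real k) * real M \<le> 2^k"
  proof (rule power2_le_imp_le)
    have "(sqrt (real k) * real M)^2 = real (k * M^2)" by (simp add: power_mult_distrib)
    also have "\<dots> \<le> real (4^k)" using cb by (simp only: of_nat_le_iff)
    also have "real (4^k) = ((2::real)^k)^2" by (simp add: power2_eq_square flip: power_mult_distrib)
    finally show "(sqrt (real k) * real M)^2 \<le> (2^k)^2" .
  qed simp
  have "real M * (1 + e) * real m \<le> real M * (1 + e) * real T"
    using mT e0 by (intro mult_left_mono) auto
  also have "\<dots> = real M * ((1 + e) * real T)" by (simp only: mult.assoc)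
  also have "\<dots> \<le> real M * (e * sqrt (real k))"
  proof (intro mult_left_mono)
    have "e * real T \<le> 4 * real T" using e4 T0 by (intro mult_right_mono) auto
    then show "(1 + e) * real T \<le> e * sqrt (real k)" using key by (simp add: algebra_simps)
  qed simp
  also have "\<dots> = e * (sqrt (real k) * real M)" by simp
  also have "\<dots> \<le> e * 2^k" using Mk e0 by (intro mult_left_mono) auto
  finally show ?thesis unfolding e_def .
qed

lemma pigeon:
  fixes D :: "nat \<Rightarrow> nat" and N r :: nat
  assumes N0: "0 < N" and DN: "\<And>i. i < r \<Longrightarrow> D i \<in> {1..N}"
  shows "\<exists>d\<in>{1..N}. r \<le> card {i. i < r \<and> D i = d} * N"
proof (rule ccontr)
  assume neg: "\<not> (\<exists>d\<in>{1..N}. r \<le> card {i. i < r \<and> D i = d} * N)"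
  have lt: "card {i. i < r \<and> D i = d} * N < r" if "d \<in> {1..N}" for d
  proof -
    have "\<not> r \<le> card {i. i < r \<and> D i = d} * N" using neg that by blast
    then show ?thesis by simp
  qed
  have img: "D ` {..<r} \<subseteq> {1..N}"
  proof
    fix y assume "y \<in> D ` {..<r}"
    then obtain i where "i < r" "y = D i" by auto
    then show "y \<in> {1..N}" using DN by simp
  qed
  have g: "(\<Sum>d\<in>{1..N}. \<Sum>i\<in>{x\<in>{..<r}. D x = d}. (1::nat)) = (\<Sum>i\<in>{..<r}. (1::nat))"
    by (rule sum.group[OF _ _ img]) simp_all
  have cards: "(\<Sum>i\<in>{x\<in>{..<r}. D x = d}. (1::nat)) = card {i. i < r \<and> D i = d}" for d
  proof -
    have "{x\<in>{..<r}. D x = d} = {i. i < r \<and> D i = d}" by blast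
    then show ?thesis by (simp only: card_eq_sum)
  qed
  have sumeq: "(\<Sum>d\<in>{1..N}. card {i. i < r \<and> D i = d}) = r"
    using g unfolding cards by simp
  have "r * N = (\<Sum>d\<in>{1..N}. card {i. i < r \<and> D i = d}) * N"
    unfolding sumeq ..
  also have "\<dots> = (\<Sum>d\<in>{1..N}. card {i. i < r \<and> D i = d} * N)"
    by (rule sum_distrib_right)
  also have "\<dots> < (\<Sum>d\<in>{1..N}. r)"
  proof (rule sum_strict_mono)
    show "finite {1..N}" by simp
    show "{1..N} \<noteq> {}" using N0 by simp
    fix d assume "d \<in> {1..N}"
    then show "card {i. i < r \<and> D i = d} * N < r" by (rule lt)
  qed
  also have "\<dots> = N * r" by simp
  finally show False by simp
qed

lemma pair_form:
  fixes p q T :: nat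
  assumes "p < T" "q < T" "p < q"
  shows "\<exists>d s. d \<in> {1..T div 2} \<and> s < T \<and> {p,q} = {s, (s+d) mod T}"
proof (cases "q - p \<le> T div 2")
  case True
  have "(p + (q - p)) mod T = q" using assms by simp
  moreover have "q - p \<in> {1..T div 2}" using True assms by simp
  ultimately show ?thesis using assms(1) by (intro exI[of _ "q-p"] exI[of _ p]) simp
next
  case False
  have mp: "(q + (T - (q - p))) mod T = p"
  proof -
    have "q + (T - (q - p)) = p + T" using assms by simp
    then show ?thesis using assms by simp
  qed
  moreover have "T - (q - p) \<in> {1..T div 2}"
  proof -
    have e1: "2*(T div 2) + T mod 2 = T" by (rule mult_div_mod_eq)
    have e2: "T mod 2 \<le> 1" by simp
    have h1: "T \<le> 2*(T div 2) + 1" using e1 e2 by linarith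
    define D where "D = q - p"
    have D1: "T div 2 < D" "D < T" using False assms unfolding D_def by auto
    have "1 \<le> T - D" "T - D \<le> T div 2" using D1 h1 by auto
    then show ?thesis unfolding D_def atLeastAtMost_iff by blast
  qed
  moreover have "{p,q} = {q, (q + (T - (q - p))) mod T}" unfolding mp by blast
  ultimately show ?thesis using assms(2) by blast
qed

lemma int_TX: "(T * X - X) mod T = (- X) mod (T::int)"
proof -
  have "T * X - X = - X + X * T" by (simp add: algebra_simps)
  then show ?thesis by (simp only: mod_mult_self1)
qed

lemma H_sub:
  assumes T0: "0 < T"
  shows "zsubgroup T (range (\<lambda>j. (j*d) mod T))"
  unfolding zsubgroup_def
proof (intro conjI ballI)
  show "range (\<lambda>j. (j*d) mod T) \<subseteq> {..<T}" using T0 by auto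
  show "0 \<in> range (\<lambda>j. (j*d) mod T)" by (rule range_eqI[where x=0]) simp
next
  fix x y assume "x \<in> range (\<lambda>j. (j*d) mod T)" "y \<in> range (\<lambda>j. (j*d) mod T)"
  then obtain a b where ab: "x = (a*d) mod T" "y = (b*d) mod T" by auto
  have "(x + y) mod T = ((a+b)*d) mod T" unfolding ab by (simp add: mod_add_eq add_mult_distrib)
  then show "(x + y) mod T \<in> range (\<lambda>j. (j*d) mod T)" by (rule range_eqI)
next
  fix x assume "x \<in> range (\<lambda>j. (j*d) mod T)"
  then obtain a where a: "x = (a*d) mod T" by auto
  have "(T - x) mod T = (((T - 1)*a)*d) mod T"
    unfolding a
    apply (subst of_nat_eq_iff[symmetric, where 'a=int])
    using T0 apply (simp add: of_nat_mod of_nat_diff mod_le_divisor less_imp_le)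
    apply (simp add: mod_simps algebra_simps)
    apply (simp add: int_TX)
    done
  then show "(T - x) mod T \<in> range (\<lambda>j. (j*d) mod T)" by (rule range_eqI)
qed

lemma t3:
  fixes a y h T :: nat
  assumes "0 < T" "a < T" "y < T" "h < T"
  shows "(((a+T-y) mod T) + h) mod T = (((a+h) mod T) + T - y) mod T"
  apply (subst of_nat_eq_iff[symmetric, where 'a=int])
  using assms apply (simp add: int_subm int_addm mod_le_divisor less_imp_le)
  apply (simp add: mod_simps algebra_simps)
  done

theorem lemma7:
  fixes T r :: nat and B :: "nat \<Rightarrow> nat set"
  assumes "T \<ge> 1"
    and "\<And>i. i < r \<Longrightarrow> B i \<subseteq> {..<T} \<and> card (B i) = 2"
    and "r \<ge> T ^ 3"
  shows "\<exists>H. zsubgroup T H \<and> H \<noteq> {0} \<and>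
           bias_at_most T (iter_sumset T B r) H (4 * real T powr (3/2) / sqrt (real r))"
proof -
  note hB = assms(2)
  define \<epsilon> where "\<epsilon> = 4 * real T powr (3/2) / sqrt (real r)"
  have T0: "0 < T" using assms(1) by simp
  have "1 \<le> T^3" using T0 by simp
  then have r0: "0 < r" using assms(3) by simp
  have T2: "2 \<le> T"
  proof -
    have "card (B 0) \<le> card {..<T}" using hB[OF r0] by (intro card_mono) auto
    then show ?thesis using hB[OF r0] by simp
  qed
  have ex: "\<forall>i\<in>{..<r}. \<exists>ds. fst ds \<in> {1..T div 2} \<and> snd ds < T \<and> B i = {snd ds, (snd ds + fst ds) mod T}"
  proof
    fix i assume "i \<in> {..<r}"
    then have i: "i < r" by simp
    obtain p q where pq: "B i = {p,q}" "p \<noteq> q" using hB[OF i] unfolding card_2_iff by auto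
    have pqT: "p < T" "q < T" using hB[OF i] pq by auto
    have "\<exists>d s. d \<in> {1..T div 2} \<and> s < T \<and> {p,q} = {s, (s+d) mod T}"
    proof (cases "p < q")
      case True then show ?thesis using pair_form[OF pqT True] by blast
    next
      case False
      then have "q < p" using pq(2) by simp
      moreover have "{p,q} = {q,p}" by blast
      ultimately show ?thesis using pair_form[OF pqT(2) pqT(1)] by metis
    qed
    then obtain d s where "d \<in> {1..T div 2}" "s < T" "{p,q} = {s, (s+d) mod T}" by blast
    then show "\<exists>ds. fst ds \<in> {1..T div 2} \<and> snd ds < T \<and> B i = {snd ds, (snd ds + fst ds) mod T}"
      using pq(1) by (intro exI[of _ "(d, s)"]) simp
  qed
  obtain f where f: "\<forall>i\<in>{..<r}. fst (f i) \<in> {1..T div 2} \<and> snd (f i) < T \<and> B i = {snd (f i), (snd (f i) + fst (f i)) mod T}"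
    using bchoice[OF ex] by blast
  define D where "D i = fst (f i)" for i
  define S where "S i = snd (f i)" for i
  have DS: "D i \<in> {1..T div 2}" "S i < T" "B i = {S i, (S i + D i) mod T}" if "i < r" for i
    using f that unfolding D_def S_def by auto
  have N0: "0 < T div 2" using T2 by simp
  obtain d where d: "d \<in> {1..T div 2}" and rk0: "r \<le> card {i. i < r \<and> D i = d} * (T div 2)"
    using pigeon[OF N0, of r D] DS(1) by blast
  define P where "P i = (i < r \<and> D i = d)" for i
  have dT: "d < T" using d T2 by auto
  have d0: "0 < d" using d by simp
  have hP: "S i < T \<and> B i = {S i, (S i + d) mod T}" if "i < r" "P i" for i
    using DS[OF that(1)] that(2) unfolding P_def by simp
  define k where "k = card {i. i < r \<and> P i}"
  have kset: "{i. i < r \<and> P i} = {i. i < r \<and> D i = d}" unfolding P_def by blast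
  have rk: "r \<le> k * (T div 2)" using rk0 unfolding k_def kset .
  define g where "g = gf T B P S r"
  define c where "c = cf T d k"
  have dec: "count (iter_sumset T B r) x = cv T g c x" if "x < T" for x
    using decomp[OF T0 dT hB hP, where n=r and x=x] that unfolding g_def c_def k_def by simp
  define m where "m = ordm T d"
  have m0: "0 < m" and mT: "m \<le> T" using ordm_basic[OF T0, of d] unfolding m_def by auto
  define M where "M = k choose (k div 2)"
  have num: "real M * (1 + \<epsilon>) * real m \<le> \<epsilon> * 2^k"
    unfolding \<epsilon>_def M_def by (rule numeric[OF T2 assms(3) rk cb_bound mT])
  have e0: "0 \<le> \<epsilon>" unfolding \<epsilon>_def by simp
  have Mle: "real M \<le> \<epsilon> * real (Fm k m b)" if "b < m" for b
  proof -
    have "2^k \<le> m * (Fm k m b + M)" using Fm_lower[OF m0 that] unfolding M_def by simp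
    then have h1: "(2::real)^k \<le> real m * real (Fm k m b) + real m * real M"
      by (simp flip: of_nat_mult of_nat_add add: distrib_left)
    have "\<epsilon> * 2^k \<le> \<epsilon> * (real m * real (Fm k m b) + real m * real M)"
      using h1 e0 by (rule mult_left_mono)
    then have "real M * (1 + \<epsilon>) * real m \<le> \<epsilon> * (real m * real (Fm k m b)) + \<epsilon> * (real m * real M)"
      using num by (simp add: distrib_left)
    then have "real m * real M \<le> real m * (\<epsilon> * real (Fm k m b))"
      by (simp add: algebra_simps)
    then show ?thesis using m0 by simp
  qed
  define H where "H = range (\<lambda>j. (j*d) mod T)"
  have Hsub: "zsubgroup T H" unfolding H_def by (rule H_sub[OF T0])
  have Hne: "H \<noteq> {0}"
  proof
    assume "H = {0}"
    moreover have "(1*d) mod T \<in> H" unfolding H_def by (rule rangeI)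
    ultimately show False using dT d0 by simp
  qed
  have pw: "real (c z) \<le> (1 + \<epsilon>) * real (c ((z + h) mod T))" if zT: "z < T" and hH: "h \<in> H" for z h
  proof (cases "\<exists>i. (i*d) mod T = z")
    case True
    then obtain i where i: "z = (i*d) mod T" by auto
    obtain j where j: "h = (j*d) mod T" using hH unfolding H_def by auto
    have zh: "(z + h) mod T = ((i+j)*d) mod T" unfolding i j by (simp add: mod_add_eq add_mult_distrib)
    have c1: "c z = Fm k m (i mod m)" unfolding c_def i m_def by (rule cf_at[OF T0])
    have c2: "c ((z + h) mod T) = Fm k m ((i+j) mod m)" unfolding c_def zh m_def by (rule cf_at[OF T0])
    have il: "Fm k m (i mod m) \<le> Fm k m ((i+j) mod m) + M"
      unfolding M_def by (rule interleave) (use m0 in simp_all)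
    have "real (c z) \<le> real (Fm k m ((i+j) mod m)) + real M" unfolding c1 using il by simp
    also have "\<dots> \<le> real (Fm k m ((i+j) mod m)) + \<epsilon> * real (Fm k m ((i+j) mod m))"
      using Mle[of "(i+j) mod m"] m0 by simp
    also have "\<dots> = (1 + \<epsilon>) * real (c ((z + h) mod T))" unfolding c2 by (simp add: algebra_simps)
    finally show ?thesis .
  next
    case False
    then have "c z = 0" unfolding c_def by (intro cf_zero) auto
    then show ?thesis using e0 by simp
  qed
  have bias: "bias_at_most T (iter_sumset T B r) H \<epsilon>"
    unfolding bias_at_most_def
  proof (intro ballI)
    fix a h assume a: "a \<in># iter_sumset T B r" and h: "h \<in> H"
    have aT: "a < T" using iter_set[OF T0, of r B] hB a by auto
    have hT: "h < T" using h T0 unfolding H_def by auto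
    have ahT: "(a + h) mod T < T" using T0 by simp
    have "real (count (iter_sumset T B r) a) = (\<Sum>y<T. real (g y) * real (c ((a+T-y) mod T)))"
      unfolding dec[OF aT] cv_def by simp
    also have "\<dots> \<le> (\<Sum>y<T. real (g y) * ((1 + \<epsilon>) * real (c ((((a+T-y) mod T) + h) mod T))))"
      by (intro sum_mono mult_left_mono pw h) (use T0 in simp_all)
    also have "\<dots> = (1 + \<epsilon>) * (\<Sum>y<T. real (g y) * real (c ((((a+h) mod T) + T - y) mod T)))"
      unfolding sum_distrib_left
    proof (rule sum.cong[OF refl])
      fix y assume "y \<in> {..<T}"
      then have "y < T" by simp
      then show "real (g y) * ((1 + \<epsilon>) * real (c ((((a+T-y) mod T) + h) mod T))) =
        (1 + \<epsilon>) * (real (g y) * real (c ((((a+h) mod T) + T - y) mod T)))"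
        using t3[OF T0 aT _ hT, of y] by simp
    qed
    also have "\<dots> = (1 + \<epsilon>) * real (count (iter_sumset T B r) ((a + h) mod T))"
      unfolding dec[OF ahT] cv_def by simp
    finally show "real (count (iter_sumset T B r) a) \<le> (1 + \<epsilon>) * real (count (iter_sumset T B r) ((a + h) mod T))" .
  qed
  show ?thesis using Hsub Hne bias unfolding \<epsilon>_def by blast
qed

end
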